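(* (Descent lemma.) Suppose $\theta$ is $\varepsilon_0$-close to $\mathcal{S}$ in the $P$-norm. Let $\theta^{\star}$ denote the projection of $\theta$ onto $\mathcal{S}$ in the $P$-norm and $\Delta=\theta-\theta^{\star}$. Then $$Q(\theta) - Q^{\star} \le \frac{\sqrt{\beta}}{2}\|\Delta\|_P^2,$$ where $Q^{\star}$ is the minimum value of $Q$.
   Context: Covariates $x\sim\mathcal{N}(0,\Sigma)$ with $\Sigma$ full rank, responses $y=Mx+z$, $z\sim\mathcal{N}(0,\Omega)$; $p\ge d$, $M\Sigma^{1/2}$ full column rank. $\theta=(A,B)$, $A\in\mathbb{R}^{p\times d}$, $B\in\mathbb{R}^{d\times d}$. Population loss $L(\theta)=\frac12\mathrm{Tr}(\Omega)+\frac12\|A\Sigma B^{\top}\Sigma^{1/2}-M\Sigma^{1/2}\|_F^2$ (closed form of the population loss of softmax self-attention), $R(\theta)=\frac18\|\Sigma^{1/2}(A^{\top}A-B^{\top}\Sigma B)\Sigma^{1/2}\|_F^2$, $Q=L+R$. With $U\Gamma V^{\top}$ an SVD of $M\Sigma^{1/2}$, $\mathcal{S}=\{(U\Gamma^{1/2}J^{\top}\Sigma^{-1/2};\ \Sigma^{-1/2}V\Gamma^{1/2}J^{\top}\Sigma^{-1/2}):J\in\mathbb{O}_d\}$ (the set of global minimizers of $Q$). $P=\mathrm{diag}(I_p,\Sigma)$, $\langle\theta_1,\theta_2\rangle_P=\mathrm{Tr}(\theta_1^{\top}P\theta_2)$. $K_0=2\sigma_d(M\Sigma^{1/2})\sigma_d(\Sigma)$,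 $K_1=2\sigma_1(M\Sigma^{1/2})\sigma_1(\Sigma)$, $\varepsilon_0=\min\left(1,\frac{\sqrt{K_0}}{\sqrt{3K_1\|\Sigma\|_{\mathrm{op}}}},\frac{(K_0/2)^{1/4}}{\sqrt{\|\Sigma\|_{\mathrm{op}}}}\right)$, $\beta=(14+7\kappa^2(\Sigma))K_1^2+21\|\Sigma\|_{\mathrm{op}}^2K_1+7\|\Sigma\|_{\mathrm{op}}^4$. Within $P$-distance $\varepsilon_0$ of $\mathcal{S}$ the one-point smoothness bound $\|P^{-1}\nabla Q(\theta)\|_P^2\le\beta\|\theta-\theta^{\star}\|_P^2$ holds. *)

theory Defs
  imports "HOL-Analysis.Analysis"
begin

definition sym_mat :: "real^'n^'n \<Rightarrow> bool" where
  "sym_mat X \<longleftrightarrow> transpose X = X"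

definition psd_mat :: "real^'n^'n \<Rightarrow> bool" where
  "psd_mat X \<longleftrightarrow> sym_mat X \<and> (\<forall>x. 0 \<le> x \<bullet> (X *v x))"

definition pd_mat :: "real^'n^'n \<Rightarrow> bool" where
  "pd_mat X \<longleftrightarrow> sym_mat X \<and> (\<forall>x. x \<noteq> 0 \<longrightarrow> 0 < x \<bullet> (X *v x))"

definition mat_sqrt :: "real^'n^'n \<Rightarrow> real^'n^'n" where
  "mat_sqrt X = (THE R. psd_mat R \<and> R ** R = X)"

definition diag_mat :: "real^'n^'n \<Rightarrow> bool" where
  "diag_mat X \<longleftrightarrow> (\<forall>i j. i \<noteq> j \<longrightarrow> X $ i $ j = 0)"

definition frob :: "real^'n^'m \<Rightarrow> real" where
  "frob X = sqrt (\<Sum>i\<in>UNIV. \<Sum>j\<in>UNIV. (X $ i $ j)^2)"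

text \<open>Largest singular value (= operator norm) and smallest singular value sigma_n of a
matrix with n columns (variational characterisation; for a tall matrix with m >= n
this is the n-th singular value).\<close>
definition sigma_max :: "real^'n^'m \<Rightarrow> real" where
  "sigma_max X = onorm (\<lambda>x. X *v x)"

definition sigma_min :: "real^'n^'m \<Rightarrow> real" where
  "sigma_min X = Inf {norm (X *v x) | x. norm x = 1}"

definition op_norm :: "real^'n^'m \<Rightarrow> real" where
  "op_norm X = onorm (\<lambda>x. X *v x)"

definition cond_num :: "real^'n^'n \<Rightarrow> real" where
  "cond_num X = sigma_max X / sigma_min X"

definition Lloss :: "real^'d^'d \<Rightarrow> real^'d^'p \<Rightarrow> real^'p^'p
    \<Rightarrow> (real^'d^'p) \<times> (real^'d^'d) \<Rightarrow> real" where
  "Lloss \<Sigma> M \<Omega> \<theta> = (case \<theta> of (A, B) \<Rightarrow>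
     trace \<Omega> / 2 + (frob (A ** \<Sigma> ** transpose B ** mat_sqrt \<Sigma> - M ** mat_sqrt \<Sigma>))^2 / 2)"

definition Rreg :: "real^'d^'d \<Rightarrow> (real^'d^'p) \<times> (real^'d^'d) \<Rightarrow> real" where
  "Rreg \<Sigma> \<theta> = (case \<theta> of (A, B) \<Rightarrow>
     (frob (mat_sqrt \<Sigma> ** (transpose A ** A - transpose B ** \<Sigma> ** B) ** mat_sqrt \<Sigma>))^2 / 8)"

definition Qloss :: "real^'d^'d \<Rightarrow> real^'d^'p \<Rightarrow> real^'p^'p
    \<Rightarrow> (real^'d^'p) \<times> (real^'d^'d) \<Rightarrow> real" where
  "Qloss \<Sigma> M \<Omega> \<theta> = Lloss \<Sigma> M \<Omega> \<theta> + Rreg \<Sigma> \<theta>"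

text \<open>P-norm with P = diag(I_p, Sigma): ||theta||_P^2 = Tr(theta^T P theta)
  = Tr(A^T A) + Tr(B^T Sigma B), theta stacked as [A; B].\<close>
definition Pnorm :: "real^'d^'d \<Rightarrow> (real^'d^'p) \<times> (real^'d^'d) \<Rightarrow> real" where
  "Pnorm \<Sigma> \<theta> = (case \<theta> of (A, B) \<Rightarrow>
     sqrt (trace (transpose A ** A) + trace (transpose B ** \<Sigma> ** B)))"

text \<open>The set S built from a (thin) SVD U Gamma V^T of M Sigma^(1/2).\<close>
definition Sset :: "real^'d^'d \<Rightarrow> real^'d^'p \<Rightarrow> real^'d^'d \<Rightarrow> real^'d^'d
    \<Rightarrow> ((real^'d^'p) \<times> (real^'d^'d)) set" where
  "Sset \<Sigma> U \<Gamma> V = {(U ** mat_sqrt \<Gamma> ** transpose J ** matrix_inv (mat_sqrt \<Sigma>),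
        matrix_inv (mat_sqrt \<Sigma>) ** V ** mat_sqrt \<Gamma> ** transpose J ** matrix_inv (mat_sqrt \<Sigma>))
      | J. orthogonal_matrix J}"

definition K0 :: "real^'d^'d \<Rightarrow> real^'d^'p \<Rightarrow> real" where
  "K0 \<Sigma> M = 2 * sigma_min (M ** mat_sqrt \<Sigma>) * sigma_min \<Sigma>"

definition K1 :: "real^'d^'d \<Rightarrow> real^'d^'p \<Rightarrow> real" where
  "K1 \<Sigma> M = 2 * sigma_max (M ** mat_sqrt \<Sigma>) * sigma_max \<Sigma>"

definition eps0 :: "real^'d^'d \<Rightarrow> real^'d^'p \<Rightarrow> real" where
  "eps0 \<Sigma> M = min 1 (min (sqrt (K0 \<Sigma> M) / sqrt (3 * K1 \<Sigma> M * op_norm \<Sigma>))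
                           (root 4 (K0 \<Sigma> M / 2) / sqrt (op_norm \<Sigma>)))"

definition beta :: "real^'d^'d \<Rightarrow> real^'d^'p \<Rightarrow> real" where
  "beta \<Sigma> M = (14 + 7 * (cond_num \<Sigma>)^2) * (K1 \<Sigma> M)^2
      + 21 * (op_norm \<Sigma>)^2 * K1 \<Sigma> M + 7 * (op_norm \<Sigma>)^4"

end

theory Submission
  imports Defs
begin


lemma mm_add_r: "((A::real^'n^'m) + B) ** C = A ** C + B ** C"
  by (vector matrix_matrix_mult_def sum.distrib[symmetric] field_simps)
lemma mm_diff_r: "((A::real^'n^'m) - B) ** C = A ** C - B ** C"
  by (vector matrix_matrix_mult_def sum_subtractf[symmetric] field_simps)
lemma mm_diff_l: "(C::real^'n^'m) ** (A - B) = C ** A - C ** B"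
  by (vector matrix_matrix_mult_def sum_subtractf[symmetric] field_simps)
lemma mv_inner_transpose: "inner x ((A::real^'n^'m) *v y) = inner (transpose A *v x) y"
  by (metis dot_lmul_matrix transpose_matrix_vector)
lemma transpose_add: "transpose ((A::real^'n^'m) + B) = transpose A + transpose B"
  by (simp add: transpose_def vec_eq_iff)
lemma transpose_diff: "transpose ((A::real^'n^'m) - B) = transpose A - transpose B"
  by (simp add: transpose_def vec_eq_iff)
lemma inner_axis_l: "inner (axis i 1) (v::real^'n) = v$i"
  by (simp add: cart_eq_inner_axis inner_commute)
lemma mat_axis: "inner (axis i 1) ((Z::real^'n^'m) *v axis j 1) = Z$i$j"
proof -
  have "(Z *v axis j 1) $ i = Z$i$j"
    by (simp add: matrix_vector_mult_def axis_def if_distrib if_distribR sum.delta' cong: if_cong)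
  then show ?thesis by (simp add: inner_axis_l)
qed
lemma inner_mat_expand: "inner x ((Z::real^'n^'m) *v y) = (\<Sum>i\<in>UNIV. \<Sum>j\<in>UNIV. x$i * Z$i$j * y$j)"
  by (simp add: inner_vec_def matrix_vector_mult_def sum_distrib_left mult.assoc)


lemma scaleR_mv: "(c *\<^sub>R (A::real^'n^'m)) *v x = c *\<^sub>R (A *v x)"
  by (simp add: scaleR_matrix_vector_assoc)

lemma sym_entry: "transpose (Z::real^'n^'n) = Z \<Longrightarrow> Z$j$i = Z$i$j"
  by (metis transpose_def vec_lambda_beta)

lemma quad_disc:
  fixes a b c :: real
  assumes "\<forall>t. 0 \<le> a + 2*t*b + t^2*c" and "0 \<le> c"
  shows "b^2 \<le> a*c"
proof (cases "c = 0")
  case True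
  have a0: "0 \<le> a" using assms(1)[rule_format, of 0] by simp
  show ?thesis
  proof (cases "b = 0")
    case False
    have "0 \<le> a + 2*(-(a+1)/(2*b))*b" using assms(1)[rule_format, of "-(a+1)/(2*b)"] True by simp
    also have "\<dots> = -1" using False by (simp add: field_simps)
    finally show ?thesis by simp
  qed (simp add: True a0)
next
  case False
  then have cp: "0 < c" using assms(2) by simp
  have "0 \<le> a + 2*(-b/c)*b + (-b/c)^2*c" using assms(1) by blast
  also have "\<dots> = a - b^2/c" using cp by (simp add: field_simps power2_eq_square)
  finally show ?thesis using cp by (simp add: field_simps)
qed

lemma psd_cs:
  assumes "psd_mat X"
  shows "(inner y (X *v x))^2 \<le> inner y (X *v y) * inner x (X *v x)"
proof -
  have sym: "transpose X = X" using assms by (simp add: psd_mat_def sym_mat_def)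
  have yx: "inner x (X *v y) = inner y (X *v x)"
    by (metis mv_inner_transpose sym inner_commute)
  have "\<forall>t. 0 \<le> inner y (X *v y) + 2*t*inner y (X *v x) + t^2*inner x (X *v x)"
  proof
    fix t :: real
    have "0 \<le> inner (y + t *\<^sub>R x) (X *v (y + t *\<^sub>R x))" using assms by (simp add: psd_mat_def)
    also have "\<dots> = inner y (X *v y) + t * inner x (X *v y) + t * inner y (X *v x) + t^2 * inner x (X *v x)"
      by (simp add: algebra_simps inner_add_left inner_add_right power2_eq_square)
    finally show "0 \<le> inner y (X *v y) + 2*t*inner y (X *v x) + t^2*inner x (X *v x)"
      using yx by simp
  qed
  then show ?thesis using quad_disc assms by (simp add: psd_mat_def)
qed

lemma psd_zero:
  assumes "psd_mat X" "inner x (X *v x) = 0"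
  shows "X *v x = 0"
proof -
  have "(inner (X *v x) (X *v x))^2 \<le> 0" using psd_cs[OF assms(1), of "X *v x" x] assms(2) by simp
  then show ?thesis by simp
qed

lemma psd_Xx_bound:
  assumes "psd_mat X" "\<forall>z. inner z (X *v z) \<le> c * (norm z)^2"
  shows "(norm (X *v x))^2 \<le> c * inner x (X *v x)"
proof (cases "X *v x = 0")
  case True
  then show ?thesis
    using assms(1) by (simp add: psd_mat_def)
next
  case False
  have q0: "0 \<le> inner x (X *v x)" using assms(1) by (simp add: psd_mat_def)
  have "((norm (X *v x))^2)^2 = (inner (X *v x) (X *v x))^2" by (simp add: power2_norm_eq_inner)
  also have "\<dots> \<le> inner (X *v x) (X *v (X *v x)) * inner x (X *v x)" by (rule psd_cs[OF assms(1)])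
  also have "\<dots> \<le> c * (norm (X *v x))^2 * inner x (X *v x)"
    using assms(2) q0 by (simp add: mult_right_mono)
  finally have h: "(norm (X *v x))^2 * (norm (X *v x))^2 \<le> (norm (X *v x))^2 * (c * inner x (X *v x))"
    by (simp add: power2_eq_square mult_ac)
  have "0 < (norm (X *v x))^2" using False by simp
  then show ?thesis using h mult_left_le_imp_le[of "(norm (X *v x))^2" "(norm (X *v x))^2" "c * inner x (X *v x)"] by linarith
qed

fun mpow :: "real^'n^'n \<Rightarrow> nat \<Rightarrow> real^'n^'n" where
  "mpow B 0 = mat 1"
| "mpow B (Suc k) = B ** mpow B k"

lemma mpow_add: "mpow B i ** mpow B j = mpow B (i+j)"
  by (induction i) (simp_all add: matrix_mul_assoc[symmetric])

lemma mpow_comm: "mpow B i ** mpow B j = mpow B j ** mpow B i"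
  by (simp add: mpow_add add.commute)

lemma mpow_1: "mpow B 1 = B" by simp

inductive conew :: "real^'n^'n \<Rightarrow> real^'n^'n \<Rightarrow> real \<Rightarrow> bool" for B where
  cw_pow: "conew B (mpow B k) 1"
| cw_add: "conew B X a \<Longrightarrow> conew B Y b \<Longrightarrow> conew B (X + Y) (a + b)"
| cw_scale: "0 \<le> c \<Longrightarrow> conew B X a \<Longrightarrow> conew B (c *\<^sub>R X) (c * a)"

lemma cw_eq: "conew B X a \<Longrightarrow> X = X' \<Longrightarrow> a = a' \<Longrightarrow> conew B X' a'" by simp

lemma cw_mult_pow: "conew B Y b \<Longrightarrow> conew B (mpow B k ** Y) b"
proof (induction rule: conew.induct)
  case (cw_pow j)
  then show ?case using conew.cw_pow[of B "k+j"] by (simp add: mpow_add)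
next
  case (cw_add X a Y b)
  then show ?case using conew.cw_add by (simp add: matrix_add_ldistrib)
next
  case (cw_scale c X a)
  then show ?case using conew.cw_scale by (simp add: matrix_scalar_ac scalar_matrix_assoc[symmetric])
qed

lemma cw_mult: "conew B X a \<Longrightarrow> conew B Y b \<Longrightarrow> conew B (X ** Y) (a * b)"
proof (induction rule: conew.induct)
  case (cw_pow k)
  then show ?case using cw_mult_pow by simp
next
  case (cw_add X a Y' b')
  then show ?case using conew.cw_add[of B "X ** Y" "a*b" "Y' ** Y" "b'*b"]
    by (simp add: mm_add_r distrib_right)
next
  case (cw_scale c X a)
  then show ?case using conew.cw_scale[of c B "X ** Y" "a*b"]
    by (simp add: scalar_matrix_assoc[symmetric] mult.assoc)
qed

lemma cw_comm_pow: "conew B Y b \<Longrightarrow> mpow B k ** Y = Y ** mpow B k"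
proof (induction rule: conew.induct)
  case (cw_pow j)
  then show ?case by (rule mpow_comm)
next
  case (cw_add X a Y b)
  then show ?case by (simp add: matrix_add_ldistrib mm_add_r)
next
  case (cw_scale c X a)
  then show ?case by (simp add: matrix_scalar_ac scalar_matrix_assoc[symmetric])
qed

lemma cw_comm: "conew B X a \<Longrightarrow> conew B Y b \<Longrightarrow> X ** Y = Y ** X"
proof (induction rule: conew.induct)
  case (cw_pow k)
  then show ?case using cw_comm_pow by metis
next
  case (cw_add X a Y' b')
  then show ?case by (simp add: matrix_add_ldistrib mm_add_r)
next
  case (cw_scale c X a)
  then show ?case by (simp add: matrix_scalar_ac scalar_matrix_assoc[symmetric])
qed




fun Yit :: "real^'n^'n \<Rightarrow> nat \<Rightarrow> real^'n^'n" where
  "Yit B 0 = 0"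
| "Yit B (Suc n) = (1/2) *\<^sub>R (B + Yit B n ** Yit B n)"

locale bctx =
  fixes B :: "real^'n^'n"
  assumes Bsym: "transpose B = B"
    and Bpsd: "\<forall>x. 0 \<le> inner x (B *v x)"
    and Bcon: "\<forall>x. norm (B *v x) \<le> norm x"
begin

lemma mpow_sym: "transpose (mpow B k) = mpow B k"
proof (induction k)
  case 0
  then show ?case by simp
next
  case (Suc k)
  have "transpose (mpow B (Suc k)) = mpow B k ** B"
    using Suc by (simp add: matrix_transpose_mul Bsym)
  also have "\<dots> = B ** mpow B k" using mpow_comm[of B k 1] by simp
  finally show ?case by simp
qed

lemma mpow_con: "norm (mpow B k *v x) \<le> norm x"
proof (induction k)
  case 0
  then show ?case by simp
next
  case (Suc k)
  have "norm (mpow B (Suc k) *v x) = norm (B *v (mpow B k *v x))"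
    by (simp add: matrix_vector_mul_assoc)
  also have "\<dots> \<le> norm (mpow B k *v x)" using Bcon by blast
  finally show ?case using Suc by linarith
qed

lemma mpow_psd: "0 \<le> inner x (mpow B k *v x)"
proof (induction k arbitrary: x rule: less_induct)
  case (less k)
  show ?case
  proof (cases k)
    case 0
    then show ?thesis by simp
  next
    case (Suc m)
    show ?thesis
    proof (cases m)
      case 0
      then show ?thesis using Suc Bpsd by simp
    next
      case (Suc l)
      have e: "mpow B k = B ** (mpow B l ** B)"
        using \<open>k = Suc m\<close> Suc mpow_comm[of B l 1] by simp
      have "inner x (mpow B k *v x) = inner (B *v x) (mpow B l *v (B *v x))"
        unfolding e by (simp add: matrix_vector_mul_assoc[symmetric] mv_inner_transpose Bsym)
      also have "\<dots> \<ge> 0" using less \<open>k = Suc m\<close> Suc by simp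
      finally show ?thesis .
    qed
  qed
qed

lemma mpow_le: "inner x (mpow B k *v x) \<le> (norm x)^2"
proof -
  have "inner x (mpow B k *v x) \<le> norm x * norm (mpow B k *v x)" by (rule norm_cauchy_schwarz)
  also have "\<dots> \<le> norm x * norm x" using mpow_con by (simp add: mult_left_mono)
  finally show ?thesis by (simp add: power2_eq_square)
qed

lemma cw_props: "conew B X a \<Longrightarrow> transpose X = X \<and> 0 \<le> a \<and>
   (\<forall>x. 0 \<le> inner x (X *v x) \<and> inner x (X *v x) \<le> a * (norm x)^2)"
proof (induction rule: conew.induct)
  case (cw_pow k)
  then show ?case using mpow_sym mpow_psd mpow_le by simp
next
  case (cw_add X a Y b)
  then show ?case by (auto simp: transpose_add matrix_vector_mult_add_rdistrib inner_add_right
        distrib_right intro: add_nonneg_nonneg add_mono)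
next
  case (cw_scale c X a)
  then show ?case by (auto simp: transpose_scalar scaleR_mv mult.assoc intro: mult_left_mono mult_nonneg_nonneg)
qed

lemma B_cone: "conew B B 1" using cw_pow[of B 1] by simp

lemma Y_cone: "\<exists>a. conew B (Yit B n) a \<and> a \<le> 1"
proof (induction n)
  case 0
  have "conew B (0 *\<^sub>R mpow B 0) (0 * 1)" by (rule cw_scale[OF _ cw_pow]) simp
  then show ?case by auto
next
  case (Suc n)
  then obtain a where a: "conew B (Yit B n) a" "a \<le> 1" by blast
  have a0: "0 \<le> a" using cw_props[OF a(1)] by simp
  have "conew B ((1/2) *\<^sub>R (B + Yit B n ** Yit B n)) ((1/2) * (1 + a * a))"
    by (intro cw_scale cw_add B_cone cw_mult a(1)) simp
  moreover have "(1/2) * (1 + a * a) \<le> 1" using a a0 by (simp add: mult_le_one)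
  ultimately show ?case by auto
qed

lemma D_cone: "\<exists>a. conew B (Yit B (Suc n) - Yit B n) a"
proof (induction n)
  case 0
  have "conew B ((1/2) *\<^sub>R B) ((1/2) * 1)" by (intro cw_scale B_cone) simp
  then show ?case by auto
next
  case (Suc n)
  then obtain d where d: "conew B (Yit B (Suc n) - Yit B n) d" by blast
  obtain a where a: "conew B (Yit B (Suc n)) a" using Y_cone by blast
  obtain b where b: "conew B (Yit B n) b" using Y_cone by blast
  have comm: "Yit B (Suc n) ** Yit B n = Yit B n ** Yit B (Suc n)" using cw_comm[OF a b] .
  have "Yit B (Suc (Suc n)) - Yit B (Suc n) =
     (1/2) *\<^sub>R (Yit B (Suc n) ** Yit B (Suc n) - Yit B n ** Yit B n)"
    unfolding Yit.simps(2)[of B "Suc n"] Yit.simps(2)[of B n] by (simp only: scaleR_right_diff_distrib[symmetric]) simp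
  also have "Yit B (Suc n) ** Yit B (Suc n) - Yit B n ** Yit B n =
     (Yit B (Suc n) - Yit B n) ** (Yit B (Suc n) + Yit B n)"
    using comm by (simp only: mm_diff_r matrix_add_ldistrib) simp
  finally have e: "Yit B (Suc (Suc n)) - Yit B (Suc n) =
     (1/2) *\<^sub>R ((Yit B (Suc n) - Yit B n) ** (Yit B (Suc n) + Yit B n))" .
  have "conew B ((1/2) *\<^sub>R ((Yit B (Suc n) - Yit B n) ** (Yit B (Suc n) + Yit B n))) ((1/2) * (d * (a + b)))"
    by (intro cw_scale cw_mult cw_add d a b) simp
  then show ?case using e by metis
qed

lemma Y_sym: "transpose (Yit B n) = Yit B n"
  using Y_cone cw_props by blast

lemma q_inc: "incseq (\<lambda>n. inner x (Yit B n *v x))"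
proof (rule incseq_SucI)
  fix n
  obtain d where d: "conew B (Yit B (Suc n) - Yit B n) d" using D_cone by blast
  have "0 \<le> inner x ((Yit B (Suc n) - Yit B n) *v x)" using cw_props[OF d] by blast
  then show "inner x (Yit B n *v x) \<le> inner x (Yit B (Suc n) *v x)"
    by (simp add: matrix_vector_mult_diff_rdistrib inner_diff_right)
qed

lemma q_bound: "inner x (Yit B n *v x) \<le> (norm x)^2"
proof -
  obtain a where a: "conew B (Yit B n) a" "a \<le> 1" using Y_cone by blast
  then have "inner x (Yit B n *v x) \<le> a * (norm x)^2" using cw_props by blast
  also have "\<dots> \<le> (norm x)^2"
  proof -
    have "0 \<le> (1 - a) * (norm x)^2" using a(2) by simp
    then show ?thesis by (simp add: algebra_simps)
  qed
  finally show ?thesis .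
qed

lemma q_conv: "convergent (\<lambda>n. inner x (Yit B n *v x))"
proof -
  obtain L where "(\<lambda>n. inner x (Yit B n *v x)) \<longlonglongrightarrow> L"
    using incseq_convergent[OF q_inc, where B="(norm x)^2"] q_bound by blast
  then show ?thesis by (auto simp: convergent_def)
qed

lemma sym_entry_quad:
  assumes "transpose (Z::real^'n^'n) = Z"
  shows "Z$i$j = (1/2) * (inner (axis i 1 + axis j 1) (Z *v (axis i 1 + axis j 1))
            - inner (axis i 1) (Z *v axis i 1) - inner (axis j 1) (Z *v axis j 1))"
  using sym_entry[OF assms, of i j]
  by (simp add: matrix_vector_right_distrib inner_add_left inner_add_right mat_axis)

lemma entry_conv: "convergent (\<lambda>n. Yit B n $ i $ j)"
proof -
  have e: "(\<lambda>n. Yit B n $ i $ j) = (\<lambda>n. (1/2) * (inner (axis i 1 + axis j 1) (Yit B n *v (axis i 1 + axis j 1))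
            - inner (axis i 1) (Yit B n *v axis i 1) - inner (axis j 1) (Yit B n *v axis j 1)))"
    using sym_entry_quad[OF Y_sym] by blast
  show ?thesis unfolding e
    by (intro convergent_mult convergent_diff convergent_const q_conv)
qed

definition "Yl = (\<chi> i j. lim (\<lambda>n. Yit B n $ i $ j))"

lemma Yl_lim: "(\<lambda>n. Yit B n $ i $ j) \<longlonglongrightarrow> Yl $ i $ j"
  using entry_conv[of i j] by (simp add: Yl_def convergent_LIMSEQ_iff)

lemma Yl_eq: "Yl = (1/2) *\<^sub>R (B + Yl ** Yl)"
proof -
  have "Yl $ i $ j = ((1/2) *\<^sub>R (B + Yl ** Yl)) $ i $ j" for i j
  proof -
    have l1: "(\<lambda>n. Yit B (Suc n) $ i $ j) \<longlonglongrightarrow> Yl $ i $ j"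
      using Yl_lim LIMSEQ_Suc by blast
    have l2: "(\<lambda>n. (1/2) * (B $ i $ j + (\<Sum>k\<in>UNIV. Yit B n $ i $ k * Yit B n $ k $ j)))
        \<longlonglongrightarrow> (1/2) * (B $ i $ j + (\<Sum>k\<in>UNIV. Yl $ i $ k * Yl $ k $ j))"
      by (intro tendsto_mult tendsto_const tendsto_add tendsto_sum Yl_lim)
    have e: "Yit B (Suc n) $ i $ j = (1/2) * (B $ i $ j + (\<Sum>k\<in>UNIV. Yit B n $ i $ k * Yit B n $ k $ j))" for n
      by (simp only: Yit.simps(2)) (simp add: matrix_matrix_mult_def)
    have "Yl $ i $ j = (1/2) * (B $ i $ j + (\<Sum>k\<in>UNIV. Yl $ i $ k * Yl $ k $ j))"
      using LIMSEQ_unique[OF l1[unfolded e] l2] .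
    then show ?thesis by (simp add: matrix_matrix_mult_def)
  qed
  then show ?thesis by (simp add: vec_eq_iff)
qed

lemma Yl_sym: "transpose Yl = Yl"
proof -
  have "Yl $ j $ i = Yl $ i $ j" for i j
  proof -
    have "(\<lambda>n. Yit B n $ j $ i) = (\<lambda>n. Yit B n $ i $ j)" using sym_entry[OF Y_sym] by blast
    then show ?thesis using Yl_lim[of j i] Yl_lim[of i j] LIMSEQ_unique by simp
  qed
  then show ?thesis by (simp add: transpose_def vec_eq_iff)
qed

lemma Yl_le: "inner x (Yl *v x) \<le> (norm x)^2"
proof -
  have "(\<lambda>n. inner x (Yit B n *v x)) \<longlonglongrightarrow> inner x (Yl *v x)"
    unfolding inner_mat_expand by (intro tendsto_mult tendsto_const tendsto_sum Yl_lim)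
  then show ?thesis using q_bound LIMSEQ_le_const2 by blast
qed

lemma sqrt_IB: "\<exists>R. psd_mat R \<and> R ** R = mat 1 - B"
proof -
  let ?R = "mat 1 - Yl"
  have P: "Yl ** Yl = 2 *\<^sub>R Yl - B"
  proof -
    have "2 *\<^sub>R Yl = 2 *\<^sub>R ((1/2) *\<^sub>R (B + Yl ** Yl))" using Yl_eq by metis
    then have h: "2 *\<^sub>R Yl = B + Yl ** Yl" by simp
    then show ?thesis by (metis add_diff_cancel_left')
  qed
  have "?R ** ?R = mat 1 - Yl - (Yl - Yl ** Yl)"
    by (simp add: mm_diff_l mm_diff_r)
  also have "\<dots> = mat 1 - B" unfolding P scaleR_2 by (simp add: algebra_simps)
  finally have sq: "?R ** ?R = mat 1 - B" .
  have "psd_mat ?R"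
    unfolding psd_mat_def sym_mat_def
    using Yl_sym Yl_le by (simp add: transpose_diff matrix_vector_mult_diff_rdistrib inner_diff_right power2_norm_eq_inner)
  then show ?thesis using sq by blast
qed

end




lemma norm_diff_scale: "(norm (x - k *\<^sub>R v))^2 = (norm x)^2 - 2*k*inner x (v::'a::real_inner) + k^2 * (norm v)^2"
proof -
  have "(norm (x - k *\<^sub>R v))^2 = inner x x - k * inner x v - k * inner v x + k * k * inner v v"
    by (simp add: power2_norm_eq_inner inner_diff_left inner_diff_right algebra_simps)
  then show ?thesis by (simp add: inner_commute[of v x] power2_eq_square flip: power2_norm_eq_inner)
qed

lemma sqrt_exists:
  fixes X :: "real^'n^'n"
  assumes X: "psd_mat X"
  shows "\<exists>R. psd_mat R \<and> R ** R = X"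
proof -
  define c where "c = 1 + onorm ((*v) X)"
  have on0: "0 \<le> onorm ((*v) X)" by (simp add: onorm_pos_le)
  have cpos: "0 < c" using on0 by (simp add: c_def)
  have Xsym: "transpose X = X" using X by (simp add: psd_mat_def sym_mat_def)
  have q0: "0 \<le> inner x (X *v x)" for x using X by (simp add: psd_mat_def)
  have qc: "inner z (X *v z) \<le> c * (norm z)^2" for z
  proof -
    have "inner z (X *v z) \<le> norm z * norm (X *v z)" by (rule norm_cauchy_schwarz)
    also have "\<dots> \<le> norm z * (onorm ((*v) X) * norm z)"
      by (intro mult_left_mono onorm) simp_all
    also have "\<dots> \<le> norm z * (c * norm z)"
      by (intro mult_left_mono) (simp_all add: c_def distrib_right)
    finally show ?thesis by (simp add: power2_eq_square mult_ac)
  qed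
  define B where "B = mat 1 - (1/c) *\<^sub>R X"
  have Bv: "B *v x = x - (1/c) *\<^sub>R (X *v x)" for x
    by (simp add: B_def matrix_vector_mult_diff_rdistrib scaleR_mv)
  have Bs: "transpose B = B" by (simp add: B_def transpose_diff transpose_scalar Xsym)
  have Bp: "\<forall>x. 0 \<le> inner x (B *v x)"
    proof
      fix x
      have "(1/c) * inner x (X *v x) \<le> (1/c) * (c * (norm x)^2)"
        using qc cpos by (intro mult_left_mono) simp_all
      then have "(1/c) * inner x (X *v x) \<le> (norm x)^2" using cpos by simp
      then show "0 \<le> inner x (B *v x)"
        by (simp add: Bv inner_diff_right power2_norm_eq_inner)
    qed
  have Bc: "\<forall>x. norm (B *v x) \<le> norm x"
    proof
      fix x
      have h: "(norm (X *v x))^2 \<le> c * inner x (X *v x)" by (rule psd_Xx_bound[OF X]) (simp add: qc)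
      have "(norm (B *v x))^2 = (norm x)^2 - 2 * (1/c) * inner x (X *v x) + (1/c)^2 * (norm (X *v x))^2"
        unfolding Bv by (rule norm_diff_scale)
      also have "\<dots> \<le> (norm x)^2 - 2 * (1/c) * inner x (X *v x) + (1/c)^2 * (c * inner x (X *v x))"
        by (rule add_left_mono, rule mult_left_mono[OF h]) simp
      also have "\<dots> = (norm x)^2 - (1/c) * inner x (X *v x)"
        using cpos by (simp add: power2_eq_square field_simps)
      also have "\<dots> \<le> (norm x)^2" using q0[of x] cpos by simp
      finally show "norm (B *v x) \<le> norm x" by (metis power2_le_imp_le norm_ge_zero)
    qed
  interpret bctx B using Bs Bp Bc by unfold_locales
  obtain R where R: "psd_mat R" "R ** R = mat 1 - B" using sqrt_IB by blast
  have RR: "R ** R = (1/c) *\<^sub>R X" using R(2) by (simp add: B_def)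
  let ?S = "sqrt c *\<^sub>R R"
  have "?S ** ?S = (sqrt c * sqrt c) *\<^sub>R (R ** R)"
    by (simp add: matrix_scalar_ac scalar_matrix_assoc[symmetric])
  also have "\<dots> = X" using cpos RR by simp
  finally have sq: "?S ** ?S = X" .
  have "psd_mat ?S"
    using R(1) cpos by (simp add: psd_mat_def sym_mat_def transpose_scalar scaleR_mv)
  then show ?thesis using sq by blast
qed

lemma trace_quad:
  fixes P R :: "real^'n^'n"
  shows "trace (transpose P ** R ** P) = (\<Sum>j\<in>UNIV. inner (column j P) (R *v column j P))"
proof -
  have h: "\<And>i. (\<Sum>k\<in>UNIV. \<Sum>n\<in>UNIV. P$k$i*(P$n$i*R$n$k)) = (\<Sum>k\<in>UNIV. \<Sum>n\<in>UNIV. P$k$i*(P$n$i*R$k$n))"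
    by (subst sum.swap) (simp add: mult_ac)
  show ?thesis
    by (simp add: trace_def matrix_matrix_mult_def transpose_def column_def matrix_vector_mult_def
      inner_vec_def sum_distrib_left sum_distrib_right mult_ac h)
qed

lemma trace_zero: "trace (0::real^'n^'n) = 0" by (simp add: trace_def)

lemma mm_column: "column j ((R::real^'n^'m) ** T) = R *v column j T"
  by (simp add: column_def matrix_matrix_mult_def matrix_vector_mult_def vec_eq_iff)

lemma psd_trace_zero:
  fixes R T :: "real^'n^'n"
  assumes R: "psd_mat R" and z: "trace (transpose T ** R ** T) = 0"
  shows "R ** T = 0"
proof -
  have nn: "\<forall>j\<in>UNIV. 0 \<le> inner (column j T) (R *v column j T)" using R by (simp add: psd_mat_def)
  have "(\<Sum>j\<in>UNIV. inner (column j T) (R *v column j T)) = 0" using z trace_quad by metis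
  then have "\<forall>j\<in>UNIV. inner (column j T) (R *v column j T) = 0"
    using sum_nonneg_eq_0_iff[of UNIV "\<lambda>j. inner (column j T) (R *v column j T)"] nn by simp
  then have "\<forall>j. column j (R ** T) = 0" using psd_zero[OF R] by (simp add: mm_column)
  then show ?thesis by (simp add: vec_eq_iff column_def) 
qed

lemma psd_trace_nonneg:
  fixes R T :: "real^'n^'n"
  assumes R: "psd_mat R"
  shows "0 \<le> trace (transpose T ** R ** T)"
  unfolding trace_quad using R by (simp add: psd_mat_def sum_nonneg)

lemma sqrt_unique:
  fixes R S :: "real^'n^'n"
  assumes R: "psd_mat R" and S: "psd_mat S" and eq: "R ** R = S ** S"
  shows "R = S"
proof -
  define T where "T = R - S"
  have Rs: "transpose R = R" and Ss: "transpose S = S" using R S by (simp_all add: psd_mat_def sym_mat_def)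
  have Ts: "transpose T = T" by (simp add: T_def transpose_diff Rs Ss)
  have "R ** T + T ** S = R ** R - S ** S"
    by (simp add: T_def mm_diff_l mm_diff_r)
  then have e0: "R ** T + T ** S = 0" using eq by simp
  have "T ** (R ** T + T ** S) = 0" using e0 by simp
  then have e1: "trace (T ** R ** T) + trace (T ** T ** S) = 0"
    by (simp add: matrix_add_ldistrib matrix_mul_assoc trace_add[symmetric] trace_zero)
  have "trace (T ** T ** S) = trace (T ** S ** T)"
    by (metis matrix_mul_assoc trace_mul_sym)
  then have e2: "trace (transpose T ** R ** T) + trace (transpose T ** S ** T) = 0"
    using e1 Ts by simp
  have n1: "0 \<le> trace (transpose T ** R ** T)" by (rule psd_trace_nonneg[OF R])
  have n2: "0 \<le> trace (transpose T ** S ** T)" by (rule psd_trace_nonneg[OF S])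
  have RT: "R ** T = 0" using psd_trace_zero[OF R] e2 n1 n2 by simp
  have ST: "S ** T = 0" using psd_trace_zero[OF S] e2 n1 n2 by simp
  have TT: "transpose T ** T = 0" using RT ST Ts by (simp add: T_def[symmetric] mm_diff_r) (metis T_def mm_diff_r diff_self)
  have "\<forall>j. (\<Sum>k\<in>UNIV. (T $ k $ j)^2) = 0"
  proof
    fix j
    have "(transpose T ** T) $ j $ j = 0" using TT by simp
    then show "(\<Sum>k\<in>UNIV. (T $ k $ j)^2) = 0"
      by (simp add: matrix_matrix_mult_def transpose_def power2_eq_square)
  qed
  then have "\<forall>j k. T $ k $ j = 0"
  proof (intro allI)
    fix j k
    assume a: "\<forall>j. (\<Sum>k\<in>UNIV. (T $ k $ j)^2) = 0"
    have "\<forall>k. (T $ k $ j)^2 = 0" using a sum_nonneg_eq_0_iff[of UNIV "\<lambda>k. (T $ k $ j)^2"] by simp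
    then show "T $ k $ j = 0" by simp
  qed
  then have "T = 0" by (simp add: vec_eq_iff)
  then show ?thesis by (simp add: T_def)
qed

lemma mat_sqrt_props:
  fixes X :: "real^'n^'n"
  assumes "psd_mat X"
  shows "psd_mat (mat_sqrt X) \<and> mat_sqrt X ** mat_sqrt X = X"
proof -
  have "\<exists>!R. psd_mat R \<and> R ** R = X"
    using sqrt_exists[OF assms] sqrt_unique by metis
  then show ?thesis unfolding mat_sqrt_def by (rule theI')
qed




lemma norm_sq_rows: "(norm (M::real^'n^'m))^2 = (\<Sum>i\<in>UNIV. (norm (M$i))^2)"
  by (simp add: power2_norm_eq_inner inner_vec_def)

lemma norm_sq_entries: "(norm (M::real^'n^'m))^2 = (\<Sum>i\<in>UNIV. \<Sum>j\<in>UNIV. (M$i$j)^2)"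
  unfolding power2_norm_eq_inner by (simp add: inner_vec_def power2_eq_square)

lemma frob_norm: "frob X = norm X"
  by (simp add: frob_def norm_eq_sqrt_inner inner_vec_def power2_eq_square)

lemma trace_tAA: "trace (transpose A ** A) = (norm (A::real^'n^'m))^2"
  unfolding norm_sq_entries
  by (simp add: trace_def matrix_matrix_mult_def transpose_def power2_eq_square) (rule sum.swap)

lemma norm_transpose: "norm (transpose (X::real^'n^'m)) = norm X"
proof -
  have "(norm (transpose X))^2 = (norm X)^2"
    unfolding norm_sq_entries by (simp add: transpose_def) (rule sum.swap)
  then show ?thesis by (simp add: power2_eq_iff_nonneg)
qed

lemma mm_row: "((P::real^'n^'m) ** Q) $ i = transpose Q *v (P $ i)"
  by (simp add: matrix_matrix_mult_def matrix_vector_mult_def transpose_def vec_eq_iff mult.commute)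

lemma frob_right:
  assumes "\<forall>z. norm (transpose Q *v z) \<le> c * norm z" "0 \<le> c"
  shows "norm ((P::real^'n^'m) ** (Q::real^'k^'n)) \<le> c * norm P"
proof -
  have "(norm (P ** Q))^2 = (\<Sum>i\<in>UNIV. (norm (transpose Q *v (P $ i)))^2)"
    unfolding norm_sq_rows[of "P ** Q"] mm_row ..
  also have "\<dots> \<le> (\<Sum>i\<in>UNIV. (c * norm (P $ i))^2)"
  proof (rule sum_mono)
    fix i
    have "norm (transpose Q *v (P $ i)) \<le> c * norm (P $ i)" using assms(1) by blast
    then show "(norm (transpose Q *v (P $ i)))^2 \<le> (c * norm (P $ i))^2" by (rule power_mono) simp
  qed
  also have "\<dots> = (c * norm P)^2"
    unfolding power_mult_distrib norm_sq_rows[of P] sum_distrib_left ..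
  finally have "(norm (P ** Q))^2 \<le> (c * norm P)^2" .
  then show ?thesis using assms(2) by (metis power2_le_imp_le norm_ge_zero mult_nonneg_nonneg)
qed

lemma frob_left:
  assumes "\<forall>z. norm (A *v z) \<le> c * norm z" "0 \<le> c"
  shows "norm ((A::real^'n^'m) ** (T::real^'k^'n)) \<le> c * norm T"
proof -
  have "norm (A ** T) = norm (transpose T ** transpose A)"
    by (metis matrix_transpose_mul norm_transpose)
  also have "\<dots> \<le> c * norm (transpose T)"
    by (rule frob_right) (simp_all add: assms)
  finally show ?thesis by (simp add: norm_transpose)
qed

lemma mv_norm_le: "norm ((A::real^'n^'m) *v z) \<le> norm A * norm z"
proof -
  have "(norm (A *v z))^2 = (\<Sum>i\<in>UNIV. (inner (A$i) z)^2)"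
    unfolding power2_norm_eq_inner by (simp add: inner_vec_def matrix_vector_mul_component power2_eq_square)
  also have "\<dots> \<le> (\<Sum>i\<in>UNIV. (norm (A$i) * norm z)^2)"
  proof (intro sum_mono)
    fix i
    have "\<bar>inner (A$i) z\<bar> \<le> norm (A$i) * norm z" by (rule Cauchy_Schwarz_ineq2)
    then show "(inner (A$i) z)^2 \<le> (norm (A$i) * norm z)^2"
      by (metis abs_ge_zero power2_abs power_mono)
  qed
  also have "\<dots> = (norm A * norm z)^2"
    unfolding power_mult_distrib norm_sq_rows[of A] sum_distrib_right ..
  finally have "(norm (A *v z))^2 \<le> (norm A * norm z)^2" .
  then show ?thesis by (metis power2_le_imp_le norm_ge_zero mult_nonneg_nonneg)
qed

lemma frob_mult: "norm ((P::real^'n^'m) ** (Q::real^'k^'n)) \<le> norm P * norm Q"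
proof -
  have "norm (P ** Q) \<le> norm (transpose Q) * norm P"
    by (rule frob_right[OF allI[OF mv_norm_le[of "transpose Q"]]]) simp
  then show ?thesis by (simp add: norm_transpose mult.commute)
qed

lemma isometry:
  assumes "transpose U ** U = mat 1"
  shows "norm ((U::real^'n^'m) *v w) = norm w"
proof -
  have "inner (U *v w) (U *v w) = inner w w"
    by (simp add: mv_inner_transpose matrix_vector_mul_assoc assms)
  then show ?thesis by (simp add: norm_eq_sqrt_inner)
qed

lemma coisometry:
  assumes "transpose U ** U = mat 1"
  shows "norm (transpose (U::real^'n^'m) *v z) \<le> norm z"
proof -
  have "(norm (transpose U *v z))^2 = inner z (U *v (transpose U *v z))"
    by (simp add: power2_norm_eq_inner mv_inner_transpose)
  also have "\<dots> \<le> norm z * norm (U *v (transpose U *v z))" by (rule norm_cauchy_schwarz)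
  also have "\<dots> = norm z * norm (transpose U *v z)" by (simp add: isometry[OF assms])
  finally have h: "(norm (transpose U *v z))^2 \<le> norm z * norm (transpose U *v z)" .
  show ?thesis
  proof (cases "norm (transpose U *v z) = 0")
    case False
    then have "0 < norm (transpose U *v z)" by simp
    then show ?thesis using h by (simp add: power2_eq_square)
  qed simp
qed




lemma final_scalar:
  fixes la lb nL nR \<alpha> \<sigma> w p q e \<beta> :: real
  assumes nn: "0 \<le> la" "0 \<le> lb" "0 \<le> nL" "0 \<le> nR" "0 \<le> \<alpha>" "0 \<le> w" "0 \<le> p" "0 \<le> q" "0 \<le> e"
    and e1: "e \<le> 1"
    and hL: "nL \<le> \<alpha>*lb + \<alpha>*la + la*lb"
    and hR: "nR \<le> 2*\<alpha>*la + la^2 + 2*\<alpha>*lb + lb^2"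
    and ha: "la \<le> w*p" and hb: "lb \<le> w*q" and pq: "p^2 + q^2 = e^2"
    and hs: "\<alpha>^2 \<le> \<sigma>"
    and hbeta: "56*\<sigma>^2*w^4 + 42*\<sigma>*w^6 + 7*w^8 \<le> \<beta>"
  shows "nL^2/2 + nR^2/8 \<le> sqrt \<beta> / 2 * e^2"
proof -
  define r2 where "r2 = la^2 + lb^2"
  define s where "s = la + lb"
  define T where "T = \<alpha> * s + r2/2"
  have s0: "0 \<le> \<sigma>" using hs by (metis order_trans zero_le_power2)
  have "la^2 \<le> (w*p)^2" using ha nn by (intro power_mono) simp_all
  moreover have "lb^2 \<le> (w*q)^2" using hb nn by (intro power_mono) simp_all
  moreover have "w^2 * e^2 = w^2*p^2 + w^2*q^2" using pq by (metis distrib_left)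
  ultimately have r2b: "r2 \<le> w^2 * e^2"
    by (simp add: r2_def power_mult_distrib)
  have r20: "0 \<le> r2" by (simp add: r2_def)
  have ss: "s^2 \<le> 2 * r2"
  proof -
    have "0 \<le> (la - lb)^2" by simp
    then show ?thesis by (simp add: s_def r2_def power2_eq_square algebra_simps)
  qed
  have ab: "la * lb \<le> r2/2"
  proof -
    have "0 \<le> (la - lb)^2" by simp
    then show ?thesis by (simp add: r2_def power2_eq_square algebra_simps)
  qed
  have T0: "0 \<le> T" using nn r20 by (simp add: T_def s_def)
  have nLT: "nL \<le> T" using hL ab by (simp add: T_def s_def algebra_simps)
  have "2 * T = 2*\<alpha>*la + la^2 + 2*\<alpha>*lb + lb^2" by (simp add: T_def s_def r2_def algebra_simps)
  then have nRT: "nR \<le> 2 * T" using hR by linarith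
  have "nL^2 \<le> T^2" using nLT nn by (intro power_mono) simp_all
  moreover have "nR^2 \<le> (2*T)^2" using nRT nn by (intro power_mono) simp_all
  ultimately have f1: "nL^2/2 + nR^2/8 \<le> T^2" by (simp add: power_mult_distrib)
  have f2: "T^2 \<le> 3/2 * \<alpha>^2 * s^2 + 3 * (r2/2)^2"
  proof -
    have "0 \<le> (\<alpha> * s - 2*(r2/2))^2" by simp
    then show ?thesis by (simp add: T_def power2_eq_square algebra_simps)
  qed
  have "\<alpha>^2 * s^2 \<le> \<sigma> * (2 * r2)" using hs ss s0 by (intro mult_mono) simp_all
  then have f3: "T^2 \<le> 3 * \<sigma> * r2 + 3/4 * r2^2" using f2 by (simp add: power2_eq_square)
  have "r2^2 \<le> (w^2*e^2)^2" using r2b r20 by (intro power_mono) simp_all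
  also have "\<dots> = w^4 * (e^2 * e^2)" by (simp add: power2_eq_square power4_eq_xxxx)
  also have "\<dots> \<le> w^4 * e^2"
  proof -
    have "e^2 \<le> 1" using e1 nn by (simp add: power_le_one)
    then have "e^2 * e^2 \<le> e^2" using mult_left_le_one_le[of "e^2" "e^2"] by simp
    then show ?thesis by (simp add: mult_left_mono)
  qed
  finally have r4: "r2^2 \<le> w^4 * e^2" .
  have "3 * \<sigma> * r2 \<le> 3 * \<sigma> * (w^2 * e^2)" using r2b s0 by (simp add: mult_left_mono)
  then have f4: "T^2 \<le> (3 * \<sigma> * w^2 + 3/4 * w^4) * e^2" using f3 r4 by (simp add: algebra_simps)
  define G where "G = 6 * \<sigma> * w^2 + 3/2 * w^4"
  have G0: "0 \<le> G" using s0 nn by (simp add: G_def)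
  have "G^2 = 36*\<sigma>^2*w^4 + 18*\<sigma>*w^6 + 9/4*w^8"
    by (simp add: G_def power2_eq_square algebra_simps power4_eq_xxxx)
       (simp add: power_def numeral_eq_Suc algebra_simps)
  also have "\<dots> \<le> 56*\<sigma>^2*w^4 + 42*\<sigma>*w^6 + 7*w^8"
    using s0 nn by (intro add_mono mult_right_mono) simp_all
  finally have "G^2 \<le> \<beta>" using hbeta by linarith
  then have Gb: "G \<le> sqrt \<beta>" using G0 real_le_rsqrt by blast
  have "(3 * \<sigma> * w^2 + 3/4 * w^4) * e^2 = G/2 * e^2" by (simp add: G_def algebra_simps)
  also have "\<dots> \<le> sqrt \<beta> / 2 * e^2" using Gb by (intro mult_right_mono) simp_all
  finally show ?thesis using f1 f4 by linarith
qed




theorem lemma2: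
  fixes \<Sigma> :: "real^'d^'d" and M :: "real^'d^'p" and \<Omega> :: "real^'p^'p"
    and U :: "real^'d^'p" and \<Gamma> :: "real^'d^'d" and V :: "real^'d^'d"
    and \<theta> \<theta>s :: "(real^'d^'p) \<times> (real^'d^'d)"
  assumes pd: "CARD('d) \<le> CARD('p)"
    and Sigma_pd: "pd_mat \<Sigma>"
    and Omega_psd: "psd_mat \<Omega>"
    and full_rank: "rank (M ** mat_sqrt \<Sigma>) = CARD('d)"
    and svd_U: "transpose U ** U = mat 1"
    and svd_V: "orthogonal_matrix V"
    and svd_Gamma: "diag_mat \<Gamma>" "\<forall>i. 0 \<le> \<Gamma> $ i $ i"
    and svd: "M ** mat_sqrt \<Sigma> = U ** \<Gamma> ** transpose V"
    and close: "\<exists>\<theta>'\<in>Sset \<Sigma> U \<Gamma> V. Pnorm \<Sigma> (\<theta> - \<theta>') \<le> eps0 \<Sigma> M"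
    and proj_mem: "\<theta>s \<in> Sset \<Sigma> U \<Gamma> V"
    and proj_min: "\<forall>\<theta>'\<in>Sset \<Sigma> U \<Gamma> V. Pnorm \<Sigma> (\<theta> - \<theta>s) \<le> Pnorm \<Sigma> (\<theta> - \<theta>')"
  shows "Qloss \<Sigma> M \<Omega> \<theta> - (INF \<eta>. Qloss \<Sigma> M \<Omega> \<eta>)
           \<le> sqrt (beta \<Sigma> M) / 2 * (Pnorm \<Sigma> (\<theta> - \<theta>s))^2"
proof -
  obtain A B where th: "\<theta> = (A, B)" by (cases \<theta>)
  define S2 where "S2 = mat_sqrt \<Sigma>"
  define Gh where "Gh = mat_sqrt \<Gamma>"
  define Si where "Si = matrix_inv S2"
  have Sig_psd: "psd_mat \<Sigma>"
  proof -
    have "0 \<le> inner x (\<Sigma> *v x)" for x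
      using Sigma_pd by (cases "x = 0") (auto simp: pd_mat_def intro: less_imp_le)
    then show ?thesis using Sigma_pd by (simp add: psd_mat_def pd_mat_def)
  qed
  have S2p: "psd_mat S2" and S2sq: "S2 ** S2 = \<Sigma>"
    using mat_sqrt_props[OF Sig_psd] by (simp_all add: S2_def)
  have S2s: "transpose S2 = S2" using S2p by (simp add: psd_mat_def sym_mat_def)
  have S2inj: "\<forall>x. S2 *v x = 0 \<longrightarrow> x = 0"
  proof (intro allI impI)
    fix x assume "S2 *v x = 0"
    then have "\<Sigma> *v x = 0" by (metis S2sq matrix_vector_mul_assoc matrix_vector_mult_0_right)
    then have "inner x (\<Sigma> *v x) = 0" by simp
    then show "x = 0" using Sigma_pd by (auto simp: pd_mat_def)
  qed
  have S2inv: "invertible S2"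
    using S2inj matrix_left_invertible_ker invertible_left_inverse by blast
  have SiS2: "Si ** S2 = mat 1" and S2Si: "S2 ** Si = mat 1"
  proof -
    have "\<exists>A'. S2 ** A' = mat 1 \<and> A' ** S2 = mat 1" using S2inv by (simp add: invertible_def)
    then have "S2 ** Si = mat 1 \<and> Si ** S2 = mat 1"
      unfolding Si_def matrix_inv_def by (rule someI_ex)
    then show "Si ** S2 = mat 1" "S2 ** Si = mat 1" by simp_all
  qed
  have Gam_psd: "psd_mat \<Gamma>"
  proof -
    have dg: "\<And>i j. i \<noteq> j \<Longrightarrow> \<Gamma> $ i $ j = 0" using svd_Gamma(1) by (simp add: diag_mat_def)
    have sym: "transpose \<Gamma> = \<Gamma>"
      by (simp add: transpose_def vec_eq_iff) (metis dg)
    have "0 \<le> inner x (\<Gamma> *v x)" for x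
    proof -
      have r: "(\<Sum>j\<in>UNIV. x$i * \<Gamma>$i$j * x$j) = (\<Sum>j\<in>UNIV. if j = i then x$i * \<Gamma>$i$i * x$i else 0)" for i
        by (rule sum.cong) (auto simp: dg)
      have "inner x (\<Gamma> *v x) = (\<Sum>i\<in>UNIV. x$i * \<Gamma>$i$i * x$i)"
        unfolding inner_mat_expand r by simp
      also have "\<dots> \<ge> 0"
      proof (intro sum_nonneg)
        fix i
        have "x$i * \<Gamma>$i$i * x$i = \<Gamma>$i$i * (x$i * x$i)" by (simp add: mult_ac)
        also have "\<dots> \<ge> 0" using svd_Gamma(2) by simp
        finally show "x$i * \<Gamma>$i$i * x$i \<ge> 0" .
      qed
      finally show ?thesis .
    qed
    then show ?thesis using sym by (simp add: psd_mat_def sym_mat_def)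
  qed
  have Ghp: "psd_mat Gh" and Ghsq: "Gh ** Gh = \<Gamma>"
    using mat_sqrt_props[OF Gam_psd] by (simp_all add: Gh_def)
  have Ghs: "transpose Gh = Gh" using Ghp by (simp add: psd_mat_def sym_mat_def)
  have VV: "transpose V ** V = mat 1" and VV': "V ** transpose V = mat 1"
    using svd_V by (simp_all add: orthogonal_matrix_def)
  obtain J where J: "orthogonal_matrix J"
    and ths: "\<theta>s = (U ** Gh ** transpose J ** Si, Si ** V ** Gh ** transpose J ** Si)"
    using proj_mem unfolding Sset_def S2_def[symmetric] Gh_def[symmetric] Si_def[symmetric] by blast
  have JJ: "transpose J ** J = mat 1" and JJ': "J ** transpose J = mat 1"
    using J by (simp_all add: orthogonal_matrix_def)
  define As where "As = U ** Gh ** transpose J ** Si"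
  define Bs where "Bs = Si ** V ** Gh ** transpose J ** Si"
  define X0 where "X0 = U ** Gh ** transpose J"
  define Y0 where "Y0 = V ** Gh ** transpose J"
  define N where "N = M ** S2"
  define dA where "dA = A - As"
  define dB where "dB = B - Bs"
  define a where "a = dA ** S2"
  define b where "b = S2 ** dB ** S2"
  have k1: "As ** S2 = X0"
  proof -
    have "As ** S2 = X0 ** (Si ** S2)" by (simp add: As_def X0_def matrix_mul_assoc)
    then show ?thesis by (simp add: SiS2)
  qed
  have k2: "S2 ** Bs ** S2 = Y0"
  proof -
    have "S2 ** Bs ** S2 = (S2 ** Si) ** Y0 ** (Si ** S2)" by (simp add: Bs_def Y0_def matrix_mul_assoc)
    then show ?thesis by (simp add: SiS2 S2Si)
  qed
  have k3a: "A ** S2 = X0 + a" by (simp add: a_def dA_def mm_diff_r k1)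
  have k3b: "S2 ** B ** S2 = Y0 + b" by (simp add: b_def dB_def mm_diff_r mm_diff_l k2)
  have k4: "A ** \<Sigma> ** transpose B ** S2 = (A ** S2) ** transpose (S2 ** B ** S2)"
  proof -
    have "A ** \<Sigma> ** transpose B ** S2 = A ** (S2 ** S2) ** transpose B ** S2" by (simp add: S2sq)
    also have "\<dots> = (A ** S2) ** transpose (S2 ** B ** S2)"
      by (simp add: matrix_transpose_mul S2s matrix_mul_assoc)
    finally show ?thesis .
  qed
  have k5: "X0 ** transpose Y0 = N"
  proof -
    have "X0 ** transpose Y0 = U ** Gh ** (transpose J ** J) ** Gh ** transpose V"
      by (simp add: X0_def Y0_def matrix_transpose_mul Ghs matrix_mul_assoc)
    also have "\<dots> = U ** (Gh ** Gh) ** transpose V" by (simp add: JJ matrix_mul_assoc)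
    finally show ?thesis by (simp add: Ghsq N_def svd[folded S2_def])
  qed
  have k6: "transpose X0 ** X0 = transpose Y0 ** Y0"
  proof -
    have "transpose X0 ** X0 = J ** Gh ** (transpose U ** U) ** Gh ** transpose J"
      by (simp add: X0_def matrix_transpose_mul Ghs matrix_mul_assoc)
    also have "\<dots> = J ** Gh ** Gh ** transpose J" by (simp add: svd_U)
    also have "\<dots> = J ** Gh ** (transpose V ** V) ** Gh ** transpose J" by (simp add: VV)
    also have "\<dots> = transpose Y0 ** Y0"
      by (simp add: Y0_def matrix_transpose_mul Ghs matrix_mul_assoc)
    finally show ?thesis .
  qed
  define Lm where "Lm = A ** \<Sigma> ** transpose B ** S2 - M ** S2"
  define Rm where "Rm = S2 ** (transpose A ** A - transpose B ** \<Sigma> ** B) ** S2"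
  have k7: "Lm = X0 ** transpose b + a ** transpose Y0 + a ** transpose b"
  proof -
    have "Lm = (X0 + a) ** (transpose Y0 + transpose b) - X0 ** transpose Y0"
      by (simp add: Lm_def k4 k3a k3b transpose_add k5 N_def)
    then show ?thesis by (simp add: mm_add_r matrix_add_ldistrib algebra_simps)
  qed
  have k8: "Rm = transpose X0 ** a + transpose a ** X0 + transpose a ** a
              - (transpose Y0 ** b + transpose b ** Y0 + transpose b ** b)"
  proof -
    have "Rm = S2 ** transpose A ** A ** S2 - S2 ** transpose B ** (S2 ** S2) ** B ** S2"
      by (simp add: Rm_def S2sq mm_diff_l mm_diff_r matrix_mul_assoc)
    also have "\<dots> = transpose (A ** S2) ** (A ** S2) - transpose (S2 ** B ** S2) ** (S2 ** B ** S2)"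
      by (simp add: matrix_transpose_mul S2s matrix_mul_assoc)
    also have "\<dots> = transpose (X0 + a) ** (X0 + a) - transpose (Y0 + b) ** (Y0 + b)"
      by (simp add: k3a k3b)
    also have "\<dots> = transpose X0 ** X0 + transpose X0 ** a + transpose a ** X0 + transpose a ** a
         - (transpose Y0 ** Y0 + transpose Y0 ** b + transpose b ** Y0 + transpose b ** b)"
      by (simp add: transpose_add mm_add_r matrix_add_ldistrib algebra_simps)
    finally show ?thesis using k6 by (simp add: algebra_simps)
  qed
  define \<sigma> where "\<sigma> = onorm ((*v) N)"
  define \<alpha> where "\<alpha> = sqrt \<sigma>"
  define op where "op = onorm ((*v) \<Sigma>)"
  define w where "w = sqrt op"
  have s0: "0 \<le> \<sigma>" by (simp add: \<sigma>_def onorm_pos_le)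
  have op0: "0 \<le> op" by (simp add: op_def onorm_pos_le)
  have al0: "0 \<le> \<alpha>" by (simp add: \<alpha>_def s0)
  have w0: "0 \<le> w" by (simp add: w_def op0)
  have al2: "\<alpha>^2 = \<sigma>" by (simp add: \<alpha>_def s0)
  have w2: "w^2 = op" by (simp add: w_def op0)
  have Nb: "norm (N *v z) \<le> \<sigma> * norm z" for z unfolding \<sigma>_def by (rule onorm) simp
  have Sb: "norm (\<Sigma> *v z) \<le> op * norm z" for z unfolding op_def by (rule onorm) simp
  have UG: "U ** \<Gamma> = N ** V"
  proof -
    have "N ** V = U ** \<Gamma> ** (transpose V ** V)" by (simp add: N_def svd[folded S2_def] matrix_mul_assoc)
    then show ?thesis by (simp add: VV)
  qed
  have Gb: "norm (\<Gamma> *v z) \<le> \<sigma> * norm z" for z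
  proof -
    have "norm (\<Gamma> *v z) = norm (U *v (\<Gamma> *v z))" by (simp add: isometry[OF svd_U])
    also have "\<dots> = norm (N *v (V *v z))" by (simp add: matrix_vector_mul_assoc UG)
    also have "\<dots> \<le> \<sigma> * norm (V *v z)" by (rule Nb)
    also have "\<dots> = \<sigma> * norm z" by (simp add: isometry[OF VV])
    finally show ?thesis .
  qed
  have Ghb: "norm (Gh *v z) \<le> \<alpha> * norm z" for z
  proof -
    have "(norm (Gh *v z))^2 = inner (Gh *v z) (Gh *v z)" by (simp add: power2_norm_eq_inner)
    also have "\<dots> = inner (transpose Gh *v (Gh *v z)) z" by (rule mv_inner_transpose)
    also have "\<dots> = inner z (\<Gamma> *v z)" by (simp only: Ghs matrix_vector_mul_assoc Ghsq inner_commute)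
    also have "\<dots> \<le> norm z * norm (\<Gamma> *v z)" by (rule norm_cauchy_schwarz)
    also have "\<dots> \<le> norm z * (\<sigma> * norm z)" by (intro mult_left_mono Gb) simp
    also have "\<dots> = (\<alpha> * norm z)^2" using al2 by (simp add: power2_eq_square mult_ac)
    finally have "(norm (Gh *v z))^2 \<le> (\<alpha> * norm z)^2" .
    then show ?thesis using al0 by (metis power2_le_imp_le norm_ge_zero mult_nonneg_nonneg)
  qed
  have S2b: "norm (S2 *v z) \<le> w * norm z" for z
  proof -
    have "(norm (S2 *v z))^2 = inner (S2 *v z) (S2 *v z)" by (simp add: power2_norm_eq_inner)
    also have "\<dots> = inner (transpose S2 *v (S2 *v z)) z" by (rule mv_inner_transpose)
    also have "\<dots> = inner z (\<Sigma> *v z)" by (simp only: S2s matrix_vector_mul_assoc S2sq inner_commute)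
    also have "\<dots> \<le> norm z * norm (\<Sigma> *v z)" by (rule norm_cauchy_schwarz)
    also have "\<dots> \<le> norm z * (op * norm z)" by (intro mult_left_mono Sb) simp
    also have "\<dots> = (w * norm z)^2" using w2 by (simp add: power2_eq_square mult_ac)
    finally have "(norm (S2 *v z))^2 \<le> (w * norm z)^2" .
    then show ?thesis using w0 by (metis power2_le_imp_le norm_ge_zero mult_nonneg_nonneg)
  qed
  have Jt: "transpose (transpose J) ** transpose J = mat 1" using JJ' by simp
  have X0b: "norm (X0 *v z) \<le> \<alpha> * norm z" for z
  proof -
    have "norm (X0 *v z) = norm (Gh *v (transpose J *v z))"
      by (simp add: X0_def matrix_vector_mul_assoc[symmetric] isometry[OF svd_U])
    also have "\<dots> \<le> \<alpha> * norm (transpose J *v z)" by (rule Ghb)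
    finally show ?thesis using isometry[OF Jt, of z] by simp
  qed
  have Y0b: "norm (Y0 *v z) \<le> \<alpha> * norm z" for z
  proof -
    have "norm (Y0 *v z) = norm (Gh *v (transpose J *v z))"
      by (simp add: Y0_def matrix_vector_mul_assoc[symmetric] isometry[OF VV])
    also have "\<dots> \<le> \<alpha> * norm (transpose J *v z)" by (rule Ghb)
    finally show ?thesis using isometry[OF Jt, of z] by simp
  qed
  have X0tb: "norm (transpose X0 *v z) \<le> \<alpha> * norm z" for z
  proof -
    have "norm (transpose X0 *v z) = norm (Gh *v (transpose U *v z))"
      by (simp add: X0_def matrix_transpose_mul Ghs matrix_vector_mul_assoc[symmetric] isometry[OF JJ])
    also have "\<dots> \<le> \<alpha> * norm (transpose U *v z)" by (rule Ghb)
    also have "\<dots> \<le> \<alpha> * norm z" by (intro mult_left_mono coisometry[OF svd_U] al0)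
    finally show ?thesis .
  qed
  have Y0tb: "norm (transpose Y0 *v z) \<le> \<alpha> * norm z" for z
  proof -
    have "norm (transpose Y0 *v z) = norm (Gh *v (transpose V *v z))"
      by (simp add: Y0_def matrix_transpose_mul Ghs matrix_vector_mul_assoc[symmetric] isometry[OF JJ])
    also have "\<dots> \<le> \<alpha> * norm (transpose V *v z)" by (rule Ghb)
    also have "\<dots> \<le> \<alpha> * norm z" by (intro mult_left_mono coisometry[OF VV] al0)
    finally show ?thesis .
  qed
  define la where "la = norm a"
  define lb where "lb = norm b"
  have Ytt: "\<forall>z. norm (transpose (transpose Y0) *v z) \<le> \<alpha> * norm z" using Y0b by simp
  have Xtt: "\<forall>z. norm (transpose X0 *v z) \<le> \<alpha> * norm z" using X0tb by simp
  have Ytt2: "\<forall>z. norm (transpose Y0 *v z) \<le> \<alpha> * norm z" using Y0tb by simp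
  have S2tt: "\<forall>z. norm (transpose S2 *v z) \<le> w * norm z" using S2b S2s by simp
  have L1: "norm (X0 ** transpose b) \<le> \<alpha> * lb"
    using frob_left[of X0 \<alpha> "transpose b"] X0b al0 by (simp add: norm_transpose lb_def)
  have L2: "norm (a ** transpose Y0) \<le> \<alpha> * la"
    using frob_right[OF Ytt al0, of a] by (simp add: la_def)
  have L3: "norm (a ** transpose b) \<le> la * lb"
    using frob_mult[of a "transpose b"] by (simp add: norm_transpose la_def lb_def)
  have nLb: "norm Lm \<le> \<alpha> * lb + \<alpha> * la + la * lb"
  proof -
    have "norm Lm \<le> norm (X0 ** transpose b) + norm (a ** transpose Y0) + norm (a ** transpose b)"
      unfolding k7 by (meson norm_triangle_ineq add_mono order_trans order_refl)
    then show ?thesis using L1 L2 L3 by linarith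
  qed
  have R1: "norm (transpose X0 ** a) \<le> \<alpha> * la"
    using frob_left[of "transpose X0" \<alpha> a] X0tb al0 by (simp add: la_def)
  have R2: "norm (transpose a ** X0) \<le> \<alpha> * la"
    using frob_right[OF Xtt al0, of "transpose a"] by (simp add: la_def norm_transpose)
  have R3: "norm (transpose a ** a) \<le> la^2"
    using frob_mult[of "transpose a" a] by (simp add: norm_transpose la_def power2_eq_square)
  have R4: "norm (transpose Y0 ** b) \<le> \<alpha> * lb"
    using frob_left[of "transpose Y0" \<alpha> b] Y0tb al0 by (simp add: lb_def)
  have R5: "norm (transpose b ** Y0) \<le> \<alpha> * lb"
    using frob_right[OF Ytt2 al0, of "transpose b"] by (simp add: lb_def norm_transpose)
  have R6: "norm (transpose b ** b) \<le> lb^2"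
    using frob_mult[of "transpose b" b] by (simp add: norm_transpose lb_def power2_eq_square)
  have nRb: "norm Rm \<le> 2 * \<alpha> * la + la^2 + 2 * \<alpha> * lb + lb^2"
  proof -
    have "norm Rm \<le> norm (transpose X0 ** a + transpose a ** X0 + transpose a ** a)
        + norm (transpose Y0 ** b + transpose b ** Y0 + transpose b ** b)"
      unfolding k8 by (rule norm_triangle_ineq4)
    also have "\<dots> \<le> (norm (transpose X0 ** a) + norm (transpose a ** X0) + norm (transpose a ** a))
        + (norm (transpose Y0 ** b) + norm (transpose b ** Y0) + norm (transpose b ** b))"
      by (intro add_mono) (meson norm_triangle_ineq add_mono order_trans order_refl)+
    finally show ?thesis using R1 R2 R3 R4 R5 R6 by linarith
  qed
  have lab: "la \<le> w * norm dA"
    using frob_right[OF S2tt w0, of dA] by (simp add: la_def a_def)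
  have lbb: "lb \<le> w * norm (S2 ** dB)"
    using frob_right[OF S2tt w0, of "S2 ** dB"] by (simp add: lb_def b_def)
  define e where "e = Pnorm \<Sigma> (\<theta> - \<theta>s)"
  have trB: "trace (transpose dB ** \<Sigma> ** dB) = (norm (S2 ** dB))^2"
  proof -
    have "transpose dB ** \<Sigma> ** dB = transpose (S2 ** dB) ** (S2 ** dB)"
      by (simp add: S2sq[symmetric] matrix_transpose_mul S2s matrix_mul_assoc)
    then show ?thesis by (simp add: trace_tAA)
  qed
  have e_eq: "e = sqrt ((norm dA)^2 + (norm (S2 ** dB))^2)"
    by (simp add: e_def th ths Pnorm_def As_def[symmetric] Bs_def[symmetric] dA_def[symmetric]
        dB_def[symmetric] trace_tAA trB)
  have e0: "0 \<le> e" by (simp add: e_eq)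
  have e2: "(norm dA)^2 + (norm (S2 ** dB))^2 = e^2" by (simp add: e_eq)
  have e1: "e \<le> 1"
  proof -
    obtain \<theta>' where t': "\<theta>' \<in> Sset \<Sigma> U \<Gamma> V" "Pnorm \<Sigma> (\<theta> - \<theta>') \<le> eps0 \<Sigma> M" using close by blast
    have "e \<le> Pnorm \<Sigma> (\<theta> - \<theta>')" using proj_min t'(1) by (simp add: e_def)
    also have "\<dots> \<le> eps0 \<Sigma> M" by (rule t'(2))
    also have "\<dots> \<le> 1" by (simp add: eps0_def)
    finally show ?thesis .
  qed
  have hbeta: "56*\<sigma>^2*w^4 + 42*\<sigma>*w^6 + 7*w^8 \<le> beta \<Sigma> M"
  proof -
    have K1e: "K1 \<Sigma> M = 2 * \<sigma> * w^2"
      by (simp add: K1_def sigma_max_def \<sigma>_def N_def S2_def w2 op_def)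
    have opn: "op_norm \<Sigma> = w^2" by (simp add: op_norm_def w2 op_def)
    have "beta \<Sigma> M = (14 + 7 * (cond_num \<Sigma>)^2) * (2 * \<sigma> * w^2)^2 + 21 * (w^2)^2 * (2 * \<sigma> * w^2) + 7 * (w^2)^4"
      by (simp add: beta_def K1e opn)
    also have "\<dots> = 56*\<sigma>^2*w^4 + 42*\<sigma>*w^6 + 7*w^8 + 7 * (cond_num \<Sigma>)^2 * (2 * \<sigma> * w^2)^2"
      by (simp add: algebra_simps power2_eq_square power_def numeral_eq_Suc)
    finally show ?thesis by simp
  qed
  have main: "(norm Lm)^2/2 + (norm Rm)^2/8 \<le> sqrt (beta \<Sigma> M) / 2 * e^2"
    by (rule final_scalar[OF _ _ _ _ al0 w0 _ _ e0 e1 nLb nRb lab lbb e2 _ hbeta])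
       (simp_all add: la_def lb_def al2)
  have Qth: "Qloss \<Sigma> M \<Omega> \<theta> = trace \<Omega> / 2 + (norm Lm)^2/2 + (norm Rm)^2/8"
    by (simp add: Qloss_def Lloss_def Rreg_def th frob_norm Lm_def Rm_def S2_def)
  have low: "trace \<Omega> / 2 \<le> (INF \<eta>. Qloss \<Sigma> M \<Omega> \<eta>)"
  proof (rule cINF_greatest)
    show "UNIV \<noteq> {}" by simp
    fix \<eta> :: "(real^'d^'p) \<times> (real^'d^'d)"
    show "trace \<Omega> / 2 \<le> Qloss \<Sigma> M \<Omega> \<eta>"
      by (cases \<eta>) (simp add: Qloss_def Lloss_def Rreg_def)
  qed
  show ?thesis using main Qth low by (simp add: e_def)
qed


end
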